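(* Suppose $L=cW$ with $c\in\mathbb{C}\setminus\{0\}$ and $W\in\mathbb{C}^{p\times p}$ unitary. Let $\mathcal A\in\mathbb{C}_p^{I_1\times\cdots\times I_N}$. For each $n$ let $\mathcal A_{(n)}=\mathcal U_n*\Sigma_n*\mathcal V_n^H$ be the t-SVD of the mode-$n$ unfolding, let $R_n$ be the t-rank of $\mathcal A_{(n)}$, let $\sigma^{(n)}_i=\|\Sigma_n(i,i)\|$ (Frobenius norm of the $i$-th diagonal tubal scalar), and fix integers $1\le I_n'\le I_n$. Let $\overline{\mathcal U}_n\in\mathbb{C}_p^{I_n\times I_n'}$ consist of the first $I_n'$ columns of $\mathcal U_n$, and define the truncated Hot-SVD approximation $$\widehat{\mathcal A}=\widetilde{\mathcal S}*_1\overline{\mathcal U}_1\cdots*_N\overline{\mathcal U}_N,\qquad \widetilde{\mathcal S}=\mathcal A*_1\overline{\mathcal U}_1^H\cdots*_N\overline{\mathcal U}_N^H\in\mathbb{C}_p^{I_1'\times\cdots\times I_N'}.$$ Then $$\|\mathcal A-\widehat{\mathcal A}\|\le\sqrt{\sum_{n=1}^N\sum_{i=I_n'+1}^{R_n}(\sigma^{(n)}_i)^2}\le\sqrt N\,\big\|\mathcal A-\mathcal S*_1\mathcal W_1\cdots*_N\mathcal W_N\big\|$$ for every $\mathcal S\in\mathbb{C}_p^{I_1'\times\cdots\times I_N'}$ and all $\mathcal W_n\in\mathbb{C}_p^{I_n\times I_n'}$ with $\mathcal W_n^H*\mathcal W_n=\mathcal I_{I_n'}$ (empty sums are $0$). In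 particular the bound holds with $\sqrt N\|\mathcal A-\mathcal A^*\|$, where $\mathcal A^*$ is an optimal solution of this orthogonal low-tubal-rank approximation problem.
   Context: Fix an integer $p\ge1$ and an invertible linear map $L:\mathbb{C}^p\to\mathbb{C}^p$. A tubal scalar is an element of $\mathbb{C}_p:=\mathbb{C}^p$. The tensor-tensor product of tubal scalars is $\mathbf a*\mathbf b=L^{-1}(L(\mathbf a)\odot L(\mathbf b))$, where $\odot$ is the componentwise product. A tubal matrix $\mathcal A\in\mathbb{C}_p^{I\times J}$ is an $I\times J$ array of tubal scalars; its $k$-th frontal slice $\mathcal A^{(k)}$ has entries $\mathcal A(i,j)^{(k)}$, and $L(\mathcal A)$ is obtained by applying $L$ to every entry. $(\mathcal A*\mathcal B)(i,k)=\sum_j\mathcal A(i,j)*\mathcal B(j,k)$; equivalently $L(\mathcal A*\mathcal B)^{(k)}=L(\mathcal A)^{(k)}L(\mathcal B)^{(k)}$. The identity $\mathcal I_I$ has $L(\mathcal I_I)^{(k)}$ equal to the $I\times I$ identity matrix for all $k$. The Hermitian transpose is defined by $L(\mathcal A^H)^{(k)}=(L(\mathcal A)^{(k)})^H$; $\mathcal A\in\mathbb{C}_p^{I\times I}$ is unitary if $\mathcal A*\mathcal A^H=\mathcal A^H*\mathcal A=\mathcal I_I$. A t-SVD of $\mathcal A\in\mathbb{C}_p^{I\times J}$ is the factorization $\mathcal A=\mathcal U*\Sigma*\mathcal V^H$ obtained by taking, for each $k$, a matrix SVD $L(\mathcal A)^{(k)}=U_kS_kV_k^H$ (with $U_k,V_k$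 unitary, $S_k$ rectangular diagonal with singular values in nonincreasing order) and defining $L(\mathcal U)^{(k)}=U_k$, $L(\Sigma)^{(k)}=S_k$, $L(\mathcal V)^{(k)}=V_k$. The t-rank is the number of nonzero tubal scalars $\Sigma(i,i)$. A tubal tensor $\mathcal A\in\mathbb{C}_p^{I_1\times\cdots\times I_N}$ is an $N$-way array of tubal scalars; its mode-$n$ unfolding $\mathcal A_{(n)}\in\mathbb{C}_p^{I_n\times\prod_{m\neq n}I_m}$ has $\mathcal A_{(n)}(i_n,j)=\mathcal A(i_1,\dots,i_N)$ with $j=1+\sum_{k\neq n}(i_k-1)\prod_{m<k,\,m\neq n}I_m$. The $n$-mode product is $(\mathcal A*_n\mathcal U)(i_1,\dots,i_{n-1},j,i_{n+1},\dots,i_N)=\sum_{i_n}\mathcal A(i_1,\dots,i_N)*\mathcal U(j,i_n)$; repeated products are evaluated left to right. $\|\cdot\|$ is the Frobenius norm (Euclidean norm of all complex entries of the underlying array). *)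

theory Defs
  imports Complex_Main
begin

text \<open>Representation conventions (all indices are 0-based).
  A tubal scalar is a function nat => complex; only components k < p matter.
  The invertible linear map L and its inverse are given by p x p matrices
  (functions nat => nat => complex, only entries i,j < p matter).
  A tubal matrix is a function nat => nat => tube (row, column);
  its dimensions are carried explicitly wherever they matter.
  A tubal tensor of dimensions Is (a list of length N) is a function
  nat list => tube, indexed by lists xs with length xs = N and xs!m < Is!m.\<close>

type_synonym tube = "nat \<Rightarrow> complex"
type_synonym tmat = "nat \<Rightarrow> nat \<Rightarrow> tube"
type_synonym tten = "nat list \<Rightarrow> tube"

definition Ltube :: "nat \<Rightarrow> (nat \<Rightarrow> nat \<Rightarrow> complex) \<Rightarrow> tube \<Rightarrow> tube" where
  "Ltube p M a = (\<lambda>k. \<Sum>j<p. M k j * a j)"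

definition tmult :: "nat \<Rightarrow> (nat \<Rightarrow> nat \<Rightarrow> complex) \<Rightarrow> (nat \<Rightarrow> nat \<Rightarrow> complex)
    \<Rightarrow> tube \<Rightarrow> tube \<Rightarrow> tube" where
  "tmult p Lm Lmi a b = Ltube p Lmi (\<lambda>k. Ltube p Lm a k * Ltube p Lm b k)"

definition tmprod :: "nat \<Rightarrow> (nat \<Rightarrow> nat \<Rightarrow> complex) \<Rightarrow> (nat \<Rightarrow> nat \<Rightarrow> complex)
    \<Rightarrow> nat \<Rightarrow> tmat \<Rightarrow> tmat \<Rightarrow> tmat" where
  "tmprod p Lm Lmi J A B = (\<lambda>i k t. \<Sum>j<J. tmult p Lm Lmi (A i j) (B j k) t)"

text \<open>Hermitian transpose: L(A^H)^(k) = (L(A)^(k))^H.\<close>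
definition tmH :: "nat \<Rightarrow> (nat \<Rightarrow> nat \<Rightarrow> complex) \<Rightarrow> (nat \<Rightarrow> nat \<Rightarrow> complex)
    \<Rightarrow> tmat \<Rightarrow> tmat" where
  "tmH p Lm Lmi A = (\<lambda>i j. Ltube p Lmi (\<lambda>k. cnj (Ltube p Lm (A j i) k)))"

text \<open>Identity tubal matrix: every frontal slice of L(I) is the identity.\<close>
definition tmId :: "nat \<Rightarrow> (nat \<Rightarrow> nat \<Rightarrow> complex) \<Rightarrow> tmat" where
  "tmId p Lmi = (\<lambda>i j. if i = j then Ltube p Lmi (\<lambda>_. 1) else (\<lambda>_. 0))"

definition tmeq :: "nat \<Rightarrow> nat \<Rightarrow> nat \<Rightarrow> tmat \<Rightarrow> tmat \<Rightarrow> bool" where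
  "tmeq p I J A B \<longleftrightarrow> (\<forall>i<I. \<forall>j<J. \<forall>k<p. A i j k = B i j k)"

definition Lslice :: "nat \<Rightarrow> (nat \<Rightarrow> nat \<Rightarrow> complex) \<Rightarrow> tmat \<Rightarrow> nat \<Rightarrow> (nat \<Rightarrow> nat \<Rightarrow> complex)" where
  "Lslice p Lm A k = (\<lambda>i j. Ltube p Lm (A i j) k)"

definition cunitary :: "nat \<Rightarrow> (nat \<Rightarrow> nat \<Rightarrow> complex) \<Rightarrow> bool" where
  "cunitary n M \<longleftrightarrow>
     (\<forall>i<n. \<forall>j<n. (\<Sum>l<n. M i l * cnj (M j l)) = (if i = j then 1 else 0)) \<and>
     (\<forall>i<n. \<forall>j<n. (\<Sum>l<n. cnj (M l i) * M l j) = (if i = j then 1 else 0))"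

definition is_svd :: "nat \<Rightarrow> nat \<Rightarrow> (nat \<Rightarrow> nat \<Rightarrow> complex) \<Rightarrow> (nat \<Rightarrow> nat \<Rightarrow> complex)
    \<Rightarrow> (nat \<Rightarrow> nat \<Rightarrow> complex) \<Rightarrow> (nat \<Rightarrow> nat \<Rightarrow> complex) \<Rightarrow> bool" where
  "is_svd I J A U S V \<longleftrightarrow>
     cunitary I U \<and> cunitary J V \<and>
     (\<forall>i<I. \<forall>j<J. i \<noteq> j \<longrightarrow> S i j = 0) \<and>
     (\<forall>i<min I J. S i i \<in> \<real> \<and> Re (S i i) \<ge> 0) \<and>
     (\<forall>i j. i \<le> j \<longrightarrow> j < min I J \<longrightarrow> Re (S j j) \<le> Re (S i i)) \<and>
     (\<forall>i<I. \<forall>j<J. A i j = (\<Sum>l<I. \<Sum>m<J. U i l * S l m * cnj (V j m)))"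

definition is_tsvd :: "nat \<Rightarrow> (nat \<Rightarrow> nat \<Rightarrow> complex) \<Rightarrow> nat \<Rightarrow> nat
    \<Rightarrow> tmat \<Rightarrow> tmat \<Rightarrow> tmat \<Rightarrow> tmat \<Rightarrow> bool" where
  "is_tsvd p Lm I J A U S V \<longleftrightarrow>
     (\<forall>k<p. is_svd I J (Lslice p Lm A k) (Lslice p Lm U k) (Lslice p Lm S k) (Lslice p Lm V k))"

definition tube_norm :: "nat \<Rightarrow> tube \<Rightarrow> real" where
  "tube_norm p a = sqrt (\<Sum>k<p. (cmod (a k))\<^sup>2)"

definition trank :: "nat \<Rightarrow> nat \<Rightarrow> nat \<Rightarrow> tmat \<Rightarrow> nat" where
  "trank p I J S = card {i. i < min I J \<and> (\<exists>k<p. S i i k \<noteq> 0)}"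

definition tidx :: "nat list \<Rightarrow> nat list set" where
  "tidx Is = {xs. length xs = length Is \<and> (\<forall>m<length Is. xs ! m < Is ! m)}"

definition tnorm :: "nat \<Rightarrow> nat list \<Rightarrow> tten \<Rightarrow> real" where
  "tnorm p Is A = sqrt (\<Sum>xs\<in>tidx Is. \<Sum>k<p. (cmod (A xs k))\<^sup>2)"

definition ncols :: "nat list \<Rightarrow> nat \<Rightarrow> nat" where
  "ncols Is n = (\<Prod>m\<in>{0..<length Is} - {n}. Is ! m)"

text \<open>Mode-n unfolding (0-based): column index j = sum_{k<>n} i_k prod_{m<k, m<>n} I_m,
  decoded by i_k = (j div prod_{m<k, m<>n} I_m) mod I_k.\<close>
definition unfold :: "nat list \<Rightarrow> nat \<Rightarrow> tten \<Rightarrow> tmat" where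
  "unfold Is n A = (\<lambda>i j. A (map (\<lambda>m. if m = n then i
        else (j div (\<Prod>l\<in>{0..<m} - {n}. Is ! l)) mod (Is ! m)) [0..<length Is]))"

definition nmode :: "nat \<Rightarrow> (nat \<Rightarrow> nat \<Rightarrow> complex) \<Rightarrow> (nat \<Rightarrow> nat \<Rightarrow> complex)
    \<Rightarrow> nat \<Rightarrow> nat \<Rightarrow> tten \<Rightarrow> tmat \<Rightarrow> tten" where
  "nmode p Lm Lmi K n A U = (\<lambda>xs t. \<Sum>i<K. tmult p Lm Lmi (A (xs[n := i])) (U (xs ! n) i) t)"

text \<open>A *_1 U_1 ... *_N U_N (left to right), where Ks!n is the mode-n dimension
  of A (unchanged by the products in the other modes) and N = length Ks.\<close>
definition mmprod :: "nat \<Rightarrow> (nat \<Rightarrow> nat \<Rightarrow> complex) \<Rightarrow> (nat \<Rightarrow> nat \<Rightarrow> complex)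
    \<Rightarrow> nat list \<Rightarrow> tten \<Rightarrow> (nat \<Rightarrow> tmat) \<Rightarrow> tten" where
  "mmprod p Lm Lmi Ks A Us = foldl (\<lambda>B n. nmode p Lm Lmi (Ks ! n) n B (Us n)) A [0..<length Ks]"

definition tcols :: "nat \<Rightarrow> tmat \<Rightarrow> tmat" where
  "tcols K U = (\<lambda>i j. if j < K then U i j else (\<lambda>_. 0))"

end

theory Submission
  imports Defs
begin

definition cin :: "nat \<Rightarrow> (nat \<Rightarrow> complex) \<Rightarrow> (nat \<Rightarrow> complex) \<Rightarrow> complex" where
  "cin L x y = (\<Sum>i<L. x i * cnj (y i))"
definition nrm2 :: "nat \<Rightarrow> (nat \<Rightarrow> complex) \<Rightarrow> real" where
  "nrm2 L x = (\<Sum>i<L. (cmod (x i))\<^sup>2)"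
definition Wx :: "nat \<Rightarrow> (nat \<Rightarrow> nat \<Rightarrow> complex) \<Rightarrow> (nat \<Rightarrow> complex) \<Rightarrow> nat \<Rightarrow> complex" where
  "Wx r W y = (\<lambda>i. \<Sum>l<r. W i l * y l)"
definition WHx :: "nat \<Rightarrow> (nat \<Rightarrow> nat \<Rightarrow> complex) \<Rightarrow> (nat \<Rightarrow> complex) \<Rightarrow> nat \<Rightarrow> complex" where
  "WHx I W u = (\<lambda>l. \<Sum>i<I. cnj (W i l) * u i)"
definition orth :: "nat \<Rightarrow> nat \<Rightarrow> (nat \<Rightarrow> nat \<Rightarrow> complex) \<Rightarrow> bool" where
  "orth I r W \<longleftrightarrow> (\<forall>l<r. \<forall>l'<r. (\<Sum>i<I. cnj (W i l) * W i l') = (if l = l' then 1 else 0))"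

lemma nrm2_cin: "complex_of_real (nrm2 L x) = cin L x x"
  unfolding nrm2_def cin_def by (simp only: of_real_sum complex_norm_square)

lemma nrm2_nonneg: "0 \<le> nrm2 L x"
  unfolding nrm2_def by (simp add: sum_nonneg)

lemma cmod_add_sq: "(cmod (a + b))\<^sup>2 = (cmod a)\<^sup>2 + (cmod b)\<^sup>2 + 2 * Re (a * cnj b)"
  unfolding cmod_power2 by (simp add: power2_eq_square algebra_simps)

lemma nrm2_add: "nrm2 L (\<lambda>i. x i + y i) = nrm2 L x + nrm2 L y + 2 * Re (cin L x y)"
  unfolding nrm2_def cin_def by (simp add: cmod_add_sq sum.distrib sum_distrib_left)

lemma nrm2_diff: "nrm2 L (\<lambda>i. x i - y i) = nrm2 L x + nrm2 L y - 2 * Re (cin L x y)"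
  using nrm2_add[of L x "\<lambda>i. - y i"]
  by (simp add: nrm2_def cin_def sum_negf)

lemma cin_adj: "cin I (Wx r W y) u = cin r y (WHx I W u)"
proof -
  have "cin I (Wx r W y) u = (\<Sum>i<I. \<Sum>l<r. W i l * y l * cnj (u i))"
    unfolding cin_def Wx_def by (simp add: sum_distrib_right)
  also have "\<dots> = (\<Sum>l<r. \<Sum>i<I. W i l * y l * cnj (u i))" by (rule sum.swap)
  also have "\<dots> = cin r y (WHx I W u)"
    unfolding cin_def WHx_def by (simp add: cnj_sum sum_distrib_left algebra_simps)
  finally show ?thesis .
qed

lemma WHW: assumes "orth I r W" "l < r" shows "WHx I W (Wx r W y) l = y l"
proof -
  have "WHx I W (Wx r W y) l = (\<Sum>i<I. \<Sum>l'<r. cnj (W i l) * W i l' * y l')"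
    unfolding WHx_def Wx_def by (simp add: sum_distrib_left algebra_simps)
  also have "\<dots> = (\<Sum>l'<r. (\<Sum>i<I. cnj (W i l) * W i l') * y l')"
    by (subst sum.swap) (simp add: sum_distrib_right)
  also have "\<dots> = (\<Sum>l'<r. (if l = l' then y l' else 0))"
    using assms unfolding orth_def by (intro sum.cong) auto
  also have "\<dots> = y l" using assms(2) by simp
  finally show ?thesis .
qed

lemma cin_cong: "(\<And>i. i < L \<Longrightarrow> x i = x' i) \<Longrightarrow> (\<And>i. i < L \<Longrightarrow> y i = y' i) \<Longrightarrow> cin L x y = cin L x' y'"
  unfolding cin_def by (intro sum.cong) auto

lemma nrm2_cong: "(\<And>i. i < L \<Longrightarrow> x i = x' i) \<Longrightarrow> nrm2 L x = nrm2 L x'"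
  unfolding nrm2_def by (intro sum.cong) auto

lemma iso: assumes "orth I r W" shows "nrm2 I (Wx r W y) = nrm2 r y"
proof -
  have "complex_of_real (nrm2 I (Wx r W y)) = cin r y (WHx I W (Wx r W y))"
    by (simp add: nrm2_cin cin_adj)
  also have "\<dots> = cin r y y" using WHW[OF assms] by (intro cin_cong) auto
  also have "\<dots> = complex_of_real (nrm2 r y)" by (simp add: nrm2_cin)
  finally show ?thesis by simp
qed

lemma bessel: assumes "orth I r W" shows "nrm2 r (WHx I W u) \<le> nrm2 I u"
proof -
  define y where "y = WHx I W u"
  have c1: "cin I u (Wx r W y) = complex_of_real (nrm2 r y)"
  proof -
    have "cin I (Wx r W y) u = cin r y y" by (simp add: cin_adj y_def)
    hence "cnj (cin I (Wx r W y) u) = cnj (cin r y y)" by simp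
    moreover have "cnj (cin I (Wx r W y) u) = cin I u (Wx r W y)"
      unfolding cin_def by (simp add: cnj_sum mult.commute)
    ultimately show ?thesis by (simp add: nrm2_cin[symmetric])
  qed
  have "0 \<le> nrm2 I (\<lambda>i. u i - Wx r W y i)" by (rule nrm2_nonneg)
  also have "\<dots> = nrm2 I u - nrm2 r y"
    using nrm2_diff[of I u "Wx r W y"] c1 iso[OF assms, of y] by simp
  finally show ?thesis by (simp add: y_def)
qed


lemma best_approx: assumes "orth I r W"
  shows "nrm2 I u - nrm2 r (WHx I W u) \<le> nrm2 I (\<lambda>i. u i - Wx r W c i)"
proof -
  define y where "y = WHx I W u"
  have "cin I u (Wx r W c) = cnj (cin I (Wx r W c) u)"
    unfolding cin_def by (simp add: cnj_sum mult.commute)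
  also have "\<dots> = cnj (cin r c y)" by (simp add: cin_adj y_def)
  also have "\<dots> = cin r y c" unfolding cin_def by (simp add: cnj_sum mult.commute)
  finally have e: "cin I u (Wx r W c) = cin r y c" .
  have "0 \<le> nrm2 r (\<lambda>i. y i - c i)" by (rule nrm2_nonneg)
  also have "\<dots> = nrm2 r y + nrm2 r c - 2 * Re (cin r y c)" by (rule nrm2_diff)
  finally have "0 \<le> nrm2 r y + nrm2 r c - 2 * Re (cin r y c)" .
  moreover have "nrm2 I (\<lambda>i. u i - Wx r W c i) = nrm2 I u + nrm2 r c - 2 * Re (cin r y c)"
    using nrm2_diff[of I u "Wx r W c"] iso[OF assms, of c] e by simp
  ultimately show ?thesis by (simp add: y_def)
qed

lemma orth_col: assumes "orth I r W" "k < r" shows "nrm2 I (\<lambda>i. W i k) = 1"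
proof -
  have "complex_of_real (nrm2 I (\<lambda>i. W i k)) = (\<Sum>i<I. cnj (W i k) * W i k)"
    unfolding nrm2_cin cin_def by (simp add: mult.commute)
  also have "\<dots> = 1" using assms unfolding orth_def by auto
  finally show ?thesis by simp
qed

lemma cunitary_orth: "cunitary I U \<Longrightarrow> orth I I U"
  unfolding cunitary_def orth_def by auto

lemma orth_mono: "orth I r U \<Longrightarrow> r' \<le> r \<Longrightarrow> orth I r' U"
  unfolding orth_def by auto

lemma recon: assumes "cunitary I U" "i < I" shows "Wx I U (WHx I U u) i = u i"
proof -
  have "Wx I U (WHx I U u) i = (\<Sum>l<I. \<Sum>i'<I. U i l * cnj (U i' l) * u i')"
    unfolding Wx_def WHx_def by (simp add: sum_distrib_left algebra_simps)
  also have "\<dots> = (\<Sum>i'<I. (\<Sum>l<I. U i l * cnj (U i' l)) * u i')"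
    by (subst sum.swap) (simp add: sum_distrib_right)
  also have "\<dots> = (\<Sum>i'<I. if i = i' then u i' else 0)"
    using assms unfolding cunitary_def by (intro sum.cong) auto
  also have "\<dots> = u i" using assms(2) by simp
  finally show ?thesis .
qed

lemma sum_if_gen: "finite A \<Longrightarrow> (\<Sum>l\<in>A. if P l then f l else 0) = sum f (A \<inter> {l. P l})"
  by (subst sum.inter_restrict) auto

lemma sum_if_lt: "r \<le> I \<Longrightarrow> (\<Sum>l<(I::nat). if l < r then f l else 0) = (\<Sum>l<r. f l)"
  by (subst sum_if_gen) (auto intro: sum.cong)

lemma sum_if_ge: "r \<le> I \<Longrightarrow> (\<Sum>l<(I::nat). if l < r then 0 else f l) = (\<Sum>l\<in>{r..<I}. f l)"
proof -
  have "(\<Sum>l<(I::nat). if l < r then 0 else f l) = (\<Sum>l<(I::nat). if \<not> l < r then f l else 0)"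
    by (intro sum.cong) auto
  also have "\<dots> = sum f ({..<I} \<inter> {l. \<not> l < r})" by (rule sum_if_gen) simp
  also have "{..<I} \<inter> {l. \<not> l < r} = {r..<I}" by auto
  finally show ?thesis by simp
qed

lemma sum_if_lt_min: "(\<Sum>l<(I::nat). if l < J then f l else 0) = (\<Sum>l<min I J. f l)"
proof -
  have "(\<Sum>l<(I::nat). if l < J then f l else 0) = sum f ({..<I} \<inter> {l. l < J})" by (rule sum_if_gen) simp
  also have "{..<I} \<inter> {l. l < J} = {..<min I J}" by auto
  finally show ?thesis by simp
qed

lemma UHM: assumes "is_svd I J M U S V" "l < I" "j < J"
  shows "WHx I U (\<lambda>i. M i j) l = (if l < J then S l l * cnj (V j l) else 0)"
proof -
  have u: "cunitary I U" using assms unfolding is_svd_def by auto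
  have "WHx I U (\<lambda>i. M i j) l = (\<Sum>i<I. cnj (U i l) * (\<Sum>a<I. \<Sum>b<J. U i a * S a b * cnj (V j b)))"
    unfolding WHx_def using assms unfolding is_svd_def by (intro sum.cong) auto
  also have "\<dots> = (\<Sum>i<I. \<Sum>a<I. \<Sum>b<J. cnj (U i l) * U i a * S a b * cnj (V j b))"
    by (simp add: sum_distrib_left algebra_simps)
  also have "\<dots> = (\<Sum>a<I. \<Sum>i<I. \<Sum>b<J. cnj (U i l) * U i a * S a b * cnj (V j b))"
    by (rule sum.swap)
  also have "\<dots> = (\<Sum>a<I. (\<Sum>i<I. cnj (U i l) * U i a) * (\<Sum>b<J. S a b * cnj (V j b)))"
    by (simp add: sum_distrib_left sum_distrib_right algebra_simps)
  also have "\<dots> = (\<Sum>a<I. if l = a then (\<Sum>b<J. S a b * cnj (V j b)) else 0)"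
    using u assms(2) unfolding cunitary_def by (intro sum.cong) auto
  also have "\<dots> = (\<Sum>b<J. S l b * cnj (V j b))" using assms(2) by simp
  also have "\<dots> = (\<Sum>b<J. if b = l then S l l * cnj (V j l) else 0)"
    using assms unfolding is_svd_def by (intro sum.cong) auto
  also have "\<dots> = (if l < J then S l l * cnj (V j l) else 0)" by simp
  finally show ?thesis .
qed

lemma Vcol: assumes "is_svd I J M U S V" "l < J" shows "(\<Sum>j<J. (cmod (V j l))\<^sup>2) = 1"
  using orth_col[OF cunitary_orth[of J V] assms(2)] assms(1) unfolding is_svd_def nrm2_def by auto

lemma TAIL: assumes "is_svd I J M U S V"
  shows "(\<Sum>j<J. \<Sum>l\<in>{r..<I}. (cmod (WHx I U (\<lambda>i. M i j) l))\<^sup>2) = (\<Sum>l\<in>{r..<min I J}. (cmod (S l l))\<^sup>2)"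
proof -
  have "(\<Sum>j<J. \<Sum>l\<in>{r..<I}. (cmod (WHx I U (\<lambda>i. M i j) l))\<^sup>2)
      = (\<Sum>j<J. \<Sum>l\<in>{r..<I}. if l < J then (cmod (S l l))\<^sup>2 * (cmod (V j l))\<^sup>2 else 0)"
    using UHM[OF assms] by (intro sum.cong) (auto simp: norm_mult power_mult_distrib)
  also have "\<dots> = (\<Sum>l\<in>{r..<I}. \<Sum>j<J. if l < J then (cmod (S l l))\<^sup>2 * (cmod (V j l))\<^sup>2 else 0)"
    by (rule sum.swap)
  also have "\<dots> = (\<Sum>l\<in>{r..<I}. if l < J then (cmod (S l l))\<^sup>2 else 0)"
  proof (intro sum.cong refl)
    fix l assume "l \<in> {r..<I}"
    show "(\<Sum>j<J. if l < J then (cmod (S l l))\<^sup>2 * (cmod (V j l))\<^sup>2 else 0) = (if l < J then (cmod (S l l))\<^sup>2 else 0)"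
      using Vcol[OF assms, of l] by (simp add: sum_distrib_left[symmetric])
  qed
  also have "\<dots> = (\<Sum>l\<in>{r..<I} \<inter> {l. l < J}. (cmod (S l l))\<^sup>2)"
    by (simp add: sum.inter_restrict)
  also have "{r..<I} \<inter> {l. l < J} = {r..<min I J}" by auto
  finally show ?thesis .
qed

lemma ML1: assumes "is_svd I J M U S V" "r \<le> I"
  shows "(\<Sum>j<J. nrm2 I (\<lambda>i. M i j - Wx r U (WHx I U (\<lambda>i'. M i' j)) i)) = (\<Sum>l\<in>{r..<min I J}. (cmod (S l l))\<^sup>2)"
proof -
  have u: "cunitary I U" using assms unfolding is_svd_def by auto
  have col: "nrm2 I (\<lambda>i. M i j - Wx r U (WHx I U (\<lambda>i'. M i' j)) i) = (\<Sum>l\<in>{r..<I}. (cmod (WHx I U (\<lambda>i. M i j) l))\<^sup>2)" for j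
  proof -
    define X where "X = WHx I U (\<lambda>i. M i j)"
    have "nrm2 I (\<lambda>i. M i j - Wx r U X i) = nrm2 I (Wx I U (\<lambda>l. if l < r then 0 else X l))"
    proof (rule nrm2_cong)
      fix i assume i: "i < I"
      have "M i j = Wx I U X i" using recon[OF u i] by (simp add: X_def)
      moreover have "Wx r U X i = (\<Sum>l<I. if l < r then U i l * X l else 0)"
        unfolding Wx_def by (simp only: sum_if_lt[OF assms(2)])
      ultimately show "M i j - Wx r U X i = Wx I U (\<lambda>l. if l < r then 0 else X l) i"
        unfolding Wx_def by (simp add: sum_subtractf[symmetric] if_distrib cong: if_cong)
    qed
    also have "\<dots> = nrm2 I (\<lambda>l. if l < r then 0 else X l)" by (rule iso[OF cunitary_orth[OF u]])
    also have "\<dots> = (\<Sum>l\<in>{r..<I}. (cmod (X l))\<^sup>2)"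
    proof -
      have "nrm2 I (\<lambda>l. if l < r then 0 else X l) = (\<Sum>l<I. if l < r then 0 else (cmod (X l))\<^sup>2)"
        unfolding nrm2_def by (intro sum.cong) auto
      then show ?thesis using sum_if_ge[OF assms(2), of "\<lambda>l. (cmod (X l))\<^sup>2"] by simp
    qed
    finally show ?thesis by (simp add: X_def)
  qed
  show ?thesis unfolding col by (rule TAIL[OF assms(1)])
qed


lemma rearr:
  fixes w s :: "nat \<Rightarrow> real"
  assumes w: "\<forall>m<L. 0 \<le> w m \<and> w m \<le> 1" and ws: "(\<Sum>m<L. w m) \<le> real r"
    and s0: "\<forall>m<L. 0 \<le> s m" and mono: "\<forall>i j. i \<le> j \<longrightarrow> j < L \<longrightarrow> s j \<le> s i"
  shows "(\<Sum>m<L. w m * s m) \<le> (\<Sum>m<min r L. s m)"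
proof (cases "L \<le> r")
  case True
  then have "min r L = L" by simp
  moreover have "(\<Sum>m<L. w m * s m) \<le> (\<Sum>m<L. s m)"
    using w s0 by (intro sum_mono) (simp add: mult_left_le_one_le)
  ultimately show ?thesis by simp
next
  case False
  then have rL: "r < L" by simp
  define t where "t = s r"
  have t0: "0 \<le> t" using s0 rL by (simp add: t_def)
  have sp: "{..<L} = {..<r} \<union> {r..<L}" using rL by auto
  have A: "(\<Sum>m<r. w m * s m) \<le> (\<Sum>m<r. s m - (1 - w m) * t)"
  proof (rule sum_mono)
    fix m assume m: "m \<in> {..<r}"
    then have "t \<le> s m" using mono rL by (auto simp: t_def)
    moreover have "0 \<le> 1 - w m" using w m rL by auto
    ultimately have "(1 - w m) * t \<le> (1 - w m) * s m" by (rule mult_left_mono)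
    then show "w m * s m \<le> s m - (1 - w m) * t" by (simp add: algebra_simps)
  qed
  have B: "(\<Sum>m\<in>{r..<L}. w m * s m) \<le> (\<Sum>m\<in>{r..<L}. w m * t)"
  proof (rule sum_mono)
    fix m assume m: "m \<in> {r..<L}"
    then have "s m \<le> t" using mono by (auto simp: t_def)
    then show "w m * s m \<le> w m * t" using w m by (auto intro: mult_left_mono)
  qed
  have C: "(\<Sum>m<r. s m - (1 - w m) * t) = (\<Sum>m<r. s m) - real r * t + t * (\<Sum>m<r. w m)"
    by (simp add: sum.distrib sum_subtractf sum_distrib_left sum_distrib_right algebra_simps)
  have D: "(\<Sum>m\<in>{r..<L}. w m * t) = t * (\<Sum>m\<in>{r..<L}. w m)"
    by (simp add: sum_distrib_left mult.commute)
  have E: "(\<Sum>m<L. w m) = (\<Sum>m<r. w m) + (\<Sum>m\<in>{r..<L}. w m)"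
    unfolding sp by (rule sum.union_disjoint) auto
  have F: "(\<Sum>m<L. w m * s m) = (\<Sum>m<r. w m * s m) + (\<Sum>m\<in>{r..<L}. w m * s m)"
    unfolding sp by (rule sum.union_disjoint) auto
  have G: "t * (\<Sum>m<L. w m) \<le> t * real r" using ws t0 by (rule mult_left_mono)
  have "min r L = r" using rL by simp
  then show ?thesis using A B C D E F G by (simp add: algebra_simps)
qed

lemma split_min: "(\<Sum>m<(L::nat). f m) = (\<Sum>m<min r L. f m) + (\<Sum>m\<in>{r..<L}. f m)"
proof (cases "r \<le> L")
  case True
  then have "{..<L} = {..<r} \<union> {r..<L}" by auto
  then have "sum f {..<L} = sum f {..<r} + sum f {r..<L}" by (metis finite_atLeastLessThan finite_lessThan ivl_disj_int_one(2) sum.union_disjoint)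
  then show ?thesis using True by (simp add: min_def)
next
  case False then show ?thesis by (simp add: min_def)
qed

lemma WHx_M: assumes "is_svd I J M U S V" "j < J"
  shows "WHx I W (\<lambda>i. M i j) k = cnj (Wx J V (\<lambda>l. cnj (if l < I then WHx I W (\<lambda>i. U i l) k * S l l else 0)) j)"
proof -
  have u: "cunitary I U" using assms unfolding is_svd_def by auto
  define X where "X = WHx I U (\<lambda>i. M i j)"
  have "WHx I W (\<lambda>i. M i j) k = (\<Sum>i<I. cnj (W i k) * (\<Sum>l<I. U i l * X l))"
    unfolding WHx_def using recon[OF u] unfolding X_def Wx_def WHx_def by (intro sum.cong) auto
  also have "\<dots> = (\<Sum>i<I. \<Sum>l<I. cnj (W i k) * U i l * X l)"
    by (simp add: sum_distrib_left algebra_simps)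
  also have "\<dots> = (\<Sum>l<I. \<Sum>i<I. cnj (W i k) * U i l * X l)" by (rule sum.swap)
  also have "\<dots> = (\<Sum>l<I. WHx I W (\<lambda>i. U i l) k * X l)"
    unfolding WHx_def by (simp add: sum_distrib_right)
  also have "\<dots> = (\<Sum>l<I. if l < J then WHx I W (\<lambda>i. U i l) k * S l l * cnj (V j l) else 0)"
    using UHM[OF assms(1) _ assms(2)] unfolding X_def by (intro sum.cong) auto
  also have "\<dots> = (\<Sum>l<min I J. WHx I W (\<lambda>i. U i l) k * S l l * cnj (V j l))"
    by (rule sum_if_lt_min)
  also have "\<dots> = (\<Sum>l<J. if l < I then WHx I W (\<lambda>i. U i l) k * S l l * cnj (V j l) else 0)"
    by (simp add: sum_if_lt_min[where I=J and J=I] min.commute)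
  also have "\<dots> = cnj (Wx J V (\<lambda>l. cnj (if l < I then WHx I W (\<lambda>i. U i l) k * S l l else 0)) j)"
    unfolding Wx_def by (simp add: cnj_sum mult.commute) (intro sum.cong, auto)
  finally show ?thesis .
qed

lemma ML2: assumes svd: "is_svd I J M U S V" and W: "orth I r W" and rI: "r \<le> I"
  shows "(\<Sum>l\<in>{r..<min I J}. (cmod (S l l))\<^sup>2) \<le> (\<Sum>j<J. nrm2 I (\<lambda>i. M i j - Wx r W (C j) i))"
proof -
  have u: "cunitary I U" and v: "cunitary J V" using svd unfolding is_svd_def by auto
  define s where "s l = (cmod (S l l))\<^sup>2" for l
  define w where "w l = nrm2 r (WHx I W (\<lambda>i. U i l))" for l
  define L where "L = min I J"
  have P1: "(\<Sum>j<J. nrm2 I (\<lambda>i. M i j)) = (\<Sum>l<L. s l)"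
  proof -
    have "nrm2 I (\<lambda>i. M i j) = (\<Sum>l\<in>{0..<I}. (cmod (WHx I U (\<lambda>i. M i j) l))\<^sup>2)" for j
    proof -
      have "nrm2 I (\<lambda>i. M i j) = nrm2 I (Wx I U (WHx I U (\<lambda>i. M i j)))"
        using recon[OF u] by (intro nrm2_cong) auto
      also have "\<dots> = nrm2 I (WHx I U (\<lambda>i. M i j))" by (rule iso[OF cunitary_orth[OF u]])
      finally show ?thesis by (simp add: nrm2_def atLeast0LessThan)
    qed
    then show ?thesis using TAIL[OF svd, of 0] by (simp add: s_def L_def atLeast0LessThan)
  qed
  define y where "y k = (\<lambda>l. cnj (if l < I then WHx I W (\<lambda>i. U i l) k * S l l else 0))" for k
  have P2: "(\<Sum>j<J. nrm2 r (WHx I W (\<lambda>i. M i j))) = (\<Sum>l<L. w l * s l)"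
  proof -
    have "(\<Sum>j<J. nrm2 r (WHx I W (\<lambda>i. M i j))) = (\<Sum>j<J. \<Sum>k<r. (cmod (Wx J V (y k) j))\<^sup>2)"
      unfolding nrm2_def using WHx_M[OF svd] by (intro sum.cong) (auto simp: y_def)
    also have "\<dots> = (\<Sum>k<r. nrm2 J (Wx J V (y k)))" unfolding nrm2_def by (rule sum.swap)
    also have "\<dots> = (\<Sum>k<r. nrm2 J (y k))" by (simp add: iso[OF cunitary_orth[OF v]])
    also have "\<dots> = (\<Sum>k<r. \<Sum>l<J. if l < I then (cmod (WHx I W (\<lambda>i. U i l) k))\<^sup>2 * s l else 0)"
      unfolding nrm2_def y_def s_def by (intro sum.cong) (auto simp: norm_mult power_mult_distrib)
    also have "\<dots> = (\<Sum>l<J. \<Sum>k<r. if l < I then (cmod (WHx I W (\<lambda>i. U i l) k))\<^sup>2 * s l else 0)"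
      by (rule sum.swap)
    also have "\<dots> = (\<Sum>l<J. if l < I then w l * s l else 0)"
      unfolding w_def nrm2_def by (intro sum.cong) (auto simp: sum_distrib_right)
    also have "\<dots> = (\<Sum>l<L. w l * s l)" using sum_if_lt_min[where I=J and J=I] by (simp add: L_def min.commute)
    finally show ?thesis .
  qed
  have w01: "\<forall>m<L. 0 \<le> w m \<and> w m \<le> 1"
  proof (intro allI impI conjI)
    fix m assume m: "m < L"
    show "0 \<le> w m" unfolding w_def by (rule nrm2_nonneg)
    have "w m \<le> nrm2 I (\<lambda>i. U i m)" unfolding w_def by (rule bessel[OF W])
    also have "\<dots> = 1" using orth_col[OF cunitary_orth[OF u], of m] m by (simp add: L_def)
    finally show "w m \<le> 1" .
  qed
  have wsum: "(\<Sum>m<L. w m) \<le> real r"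
  proof -
    have "(\<Sum>m<L. w m) \<le> (\<Sum>m<I. w m)"
      by (rule sum_mono2) (auto simp: L_def w_def nrm2_nonneg)
    also have "\<dots> = (\<Sum>k<r. nrm2 I (WHx I U (\<lambda>i. W i k)))"
    proof -
      have "(\<Sum>m<I. w m) = (\<Sum>m<I. \<Sum>k<r. (cmod (WHx I W (\<lambda>i. U i m) k))\<^sup>2)"
        by (simp add: w_def nrm2_def)
      also have "\<dots> = (\<Sum>k<r. \<Sum>m<I. (cmod (WHx I W (\<lambda>i. U i m) k))\<^sup>2)" by (rule sum.swap)
      also have "\<dots> = (\<Sum>k<r. nrm2 I (WHx I U (\<lambda>i. W i k)))"
      proof -
        have "WHx I W (\<lambda>i. U i m) k = cnj (WHx I U (\<lambda>i. W i k) m)" for m k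
          unfolding WHx_def by (simp add: cnj_sum mult.commute)
        then show ?thesis unfolding nrm2_def by simp
      qed
      finally show ?thesis .
    qed
    also have "\<dots> \<le> (\<Sum>k<r. nrm2 I (\<lambda>i. W i k))"
      by (rule sum_mono) (rule bessel[OF cunitary_orth[OF u]])
    also have "\<dots> = (\<Sum>k<r. 1)" using orth_col[OF W] by simp
    finally show ?thesis by simp
  qed
  have s0: "\<forall>m<L. 0 \<le> s m" by (simp add: s_def)
  have smono: "\<forall>i j. i \<le> j \<longrightarrow> j < L \<longrightarrow> s j \<le> s i"
  proof (intro allI impI)
    fix i j assume ij: "i \<le> j" "j < L"
    have re: "\<And>z::complex. z \<in> \<real> \<Longrightarrow> 0 \<le> Re z \<Longrightarrow> cmod z = Re z"
      by (metis Reals_cases Re_complex_of_real norm_of_real abs_of_nonneg)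
    have "S i i \<in> \<real>" "0 \<le> Re (S i i)" "S j j \<in> \<real>" "0 \<le> Re (S j j)" "Re (S j j) \<le> Re (S i i)"
      using svd ij unfolding is_svd_def L_def by auto
    then have "cmod (S j j) \<le> cmod (S i i)" using re by simp
    then show "s j \<le> s i" unfolding s_def by (simp add: power_mono)
  qed
  have R: "(\<Sum>m<L. w m * s m) \<le> (\<Sum>m<min r L. s m)" by (rule rearr[OF w01 wsum s0 smono])
  have BA: "(\<Sum>j<J. nrm2 I (\<lambda>i. M i j) - nrm2 r (WHx I W (\<lambda>i. M i j))) \<le> (\<Sum>j<J. nrm2 I (\<lambda>i. M i j - Wx r W (C j) i))"
    by (rule sum_mono) (rule best_approx[OF W])
  have "(\<Sum>l\<in>{r..<min I J}. (cmod (S l l))\<^sup>2) = (\<Sum>l<L. s l) - (\<Sum>m<min r L. s m)"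
    using split_min[of s L r] by (simp add: s_def L_def)
  also have "\<dots> \<le> (\<Sum>j<J. nrm2 I (\<lambda>i. M i j)) - (\<Sum>j<J. nrm2 r (WHx I W (\<lambda>i. M i j)))"
    using P1 P2 R by simp
  also have "\<dots> \<le> (\<Sum>j<J. nrm2 I (\<lambda>i. M i j - Wx r W (C j) i))"
    using BA by (simp add: sum_subtractf)
  finally show ?thesis .
qed


definition dec :: "nat list \<Rightarrow> nat \<Rightarrow> nat \<Rightarrow> nat \<Rightarrow> nat list" where
  "dec Is n i j = map (\<lambda>m. if m = n then i
        else (j div (\<Prod>l\<in>{0..<m} - {n}. Is ! l)) mod (Is ! m)) [0..<length Is]"

lemma unfold_dec: "unfold Is n A i j = A (dec Is n i j)"
  unfolding unfold_def dec_def by simp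

lemma dec_length[simp]: "length (dec Is n i j) = length Is"
  unfolding dec_def by simp

lemma dec_nth_n: "n < length Is \<Longrightarrow> dec Is n i j ! n = i"
  unfolding dec_def by simp

lemma dec_upd: "n < length Is \<Longrightarrow> (dec Is n i j)[n := l] = dec Is n l j"
  unfolding dec_def by (rule nth_equalityI) (auto simp: nth_list_update)

lemma dig_mod:
  fixes j w wm bm :: nat
  assumes "0 < wm" "wm * bm dvd w"
  shows "(j mod w) div wm mod bm = j div wm mod bm"
proof -
  have key: "x div wm mod bm = x mod (wm * bm) div wm" for x :: nat
  proof -
    have "x mod (wm * bm) = wm * (x div wm mod bm) + x mod wm" by (rule mod_mult2_eq)
    then show ?thesis using assms(1) by simp
  qed
  have "j mod w mod (wm * bm) = j mod (wm * bm)" using assms(2) by (rule mod_mod_cancel)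
  then show ?thesis by (simp add: key)
qed

lemma digits_inj:
  fixes b :: "nat \<Rightarrow> nat"
  assumes "\<forall>l<N. 0 < b l" "j < (\<Prod>l\<in>{0..<N} - {n}. b l)" "j' < (\<Prod>l\<in>{0..<N} - {n}. b l)"
    "\<forall>m<N. m \<noteq> n \<longrightarrow> j div (\<Prod>l\<in>{0..<m} - {n}. b l) mod b m = j' div (\<Prod>l\<in>{0..<m} - {n}. b l) mod b m"
  shows "j = j'"
  using assms
proof (induction N arbitrary: j j')
  case 0
  then show ?case by simp
next
  case (Suc N)
  define w where "w = (\<Prod>l\<in>{0..<N} - {n}. b l)"
  have wpos: "0 < w" unfolding w_def using Suc.prems(1) by (intro prod_pos) auto
  show ?case
  proof (cases "N = n")
    case True
    then have e: "{0..<Suc N} - {n} = {0..<N} - {n}" by auto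
    show ?thesis
      by (rule Suc.IH) (use Suc.prems e in auto)
  next
    case False
    then have e: "{0..<Suc N} - {n} = insert N ({0..<N} - {n})" by auto
    have W: "(\<Prod>l\<in>{0..<Suc N} - {n}. b l) = b N * w" unfolding e w_def by (simp add: prod.insert)
    have dm: "(x mod w) div (\<Prod>l\<in>{0..<m} - {n}. b l) mod b m = x div (\<Prod>l\<in>{0..<m} - {n}. b l) mod b m"
      if m: "m < N" "m \<noteq> n" for m x
    proof (rule dig_mod)
      show "0 < (\<Prod>l\<in>{0..<m} - {n}. b l)" using Suc.prems(1) m by (intro prod_pos) auto
      have "(\<Prod>l\<in>{0..<m} - {n}. b l) * b m = (\<Prod>l\<in>{0..<Suc m} - {n}. b l)"
      proof -
        have "{0..<Suc m} - {n} = insert m ({0..<m} - {n})" using m by auto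
        then show ?thesis by (simp add: prod.insert mult.commute)
      qed
      also have "\<dots> dvd w" unfolding w_def by (rule prod_dvd_prod_subset) (use m in auto)
      finally show "(\<Prod>l\<in>{0..<m} - {n}. b l) * b m dvd w" .
    qed
    have IH: "j mod w = j' mod w"
    proof (rule Suc.IH)
      show "\<forall>l<N. 0 < b l" using Suc.prems(1) by auto
      show "j mod w < (\<Prod>l\<in>{0..<N} - {n}. b l)" using wpos by (simp add: w_def[symmetric])
      show "j' mod w < (\<Prod>l\<in>{0..<N} - {n}. b l)" using wpos by (simp add: w_def[symmetric])
      show "\<forall>m<N. m \<noteq> n \<longrightarrow> j mod w div (\<Prod>l\<in>{0..<m} - {n}. b l) mod b m = j' mod w div (\<Prod>l\<in>{0..<m} - {n}. b l) mod b m"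
        using Suc.prems(4) dm by auto
    qed
    have jd: "j div w < b N" using Suc.prems(2) W by (simp add: less_mult_imp_div_less)
    have jd': "j' div w < b N" using Suc.prems(3) W by (simp add: less_mult_imp_div_less)
    have "j div w mod b N = j' div w mod b N" using Suc.prems(4) False unfolding w_def by auto
    then have "j div w = j' div w" using jd jd' by simp
    then show ?thesis using IH by (metis div_mult_mod_eq)
  qed
qed

lemma tidx_Nil: "tidx [] = {[]}"
  unfolding tidx_def by auto

lemma tidx_Cons: "tidx (b # bs) = (\<lambda>(x, xs). x # xs) ` ({..<b} \<times> tidx bs)"
proof (rule set_eqI)
  fix ys
  show "ys \<in> tidx (b # bs) \<longleftrightarrow> ys \<in> (\<lambda>(x, xs). x # xs) ` ({..<b} \<times> tidx bs)"
  proof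
    assume "ys \<in> tidx (b # bs)"
    then obtain x xs where ys: "ys = x # xs" unfolding tidx_def by (cases ys) auto
    have "x < b" "xs \<in> tidx bs" using \<open>ys \<in> tidx (b # bs)\<close> unfolding ys tidx_def by (auto dest: spec[of _ 0] spec[of _ "Suc _"])
    then show "ys \<in> (\<lambda>(x, xs). x # xs) ` ({..<b} \<times> tidx bs)" using ys by auto
  next
    assume "ys \<in> (\<lambda>(x, xs). x # xs) ` ({..<b} \<times> tidx bs)"
    then show "ys \<in> tidx (b # bs)" unfolding tidx_def by (auto simp: nth_Cons split: nat.split)
  qed
qed

lemma tidx_finite_card: "finite (tidx Is) \<and> card (tidx Is) = prod_list Is"
proof (induction Is)
  case Nil
  then show ?case by (simp add: tidx_Nil)
next
  case (Cons b bs)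
  have inj: "inj_on (\<lambda>(x, xs). x # xs) ({..<b} \<times> tidx bs)" by (auto simp: inj_on_def)
  show ?case unfolding tidx_Cons using Cons inj by (simp add: card_image card_cartesian_product)
qed

lemma dec_bij:
  assumes n: "n < length Is" and pos: "\<forall>m<length Is. 0 < Is ! m"
  shows "bij_betw (\<lambda>(i, j). dec Is n i j) ({..<Is ! n} \<times> {..<ncols Is n}) (tidx Is)"
proof -
  let ?h = "\<lambda>(i, j). dec Is n i j"
  let ?D = "{..<Is ! n} \<times> {..<ncols Is n}"
  have inj: "inj_on ?h ?D"
  proof (rule inj_onI)
    fix x y assume x: "x \<in> ?D" and y: "y \<in> ?D" and e: "?h x = ?h y"
    obtain i j where xi: "x = (i, j)" by (cases x)
    obtain i' j' where yi: "y = (i', j')" by (cases y)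
    have e': "dec Is n i j = dec Is n i' j'" using e xi yi by simp
    have "i = i'" using arg_cong[OF e', of "\<lambda>xs. xs ! n"] n by (simp add: dec_nth_n)
    moreover have "j = j'"
    proof (rule digits_inj[where b = "\<lambda>l. Is ! l" and N = "length Is" and n = n])
      show "\<forall>l<length Is. 0 < Is ! l" by (rule pos)
      show "j < (\<Prod>l\<in>{0..<length Is} - {n}. Is ! l)" using x xi by (simp add: ncols_def)
      show "j' < (\<Prod>l\<in>{0..<length Is} - {n}. Is ! l)" using y yi by (simp add: ncols_def)
      show "\<forall>m<length Is. m \<noteq> n \<longrightarrow> j div (\<Prod>l\<in>{0..<m} - {n}. Is ! l) mod Is ! m = j' div (\<Prod>l\<in>{0..<m} - {n}. Is ! l) mod Is ! m"
      proof (intro allI impI)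
        fix m assume m: "m < length Is" "m \<noteq> n"
        show "j div (\<Prod>l\<in>{0..<m} - {n}. Is ! l) mod Is ! m = j' div (\<Prod>l\<in>{0..<m} - {n}. Is ! l) mod Is ! m"
          using arg_cong[OF e', of "\<lambda>xs. xs ! m"] m unfolding dec_def by simp
      qed
    qed
    ultimately show "x = y" using xi yi by simp
  qed
  have sub: "?h ` ?D \<subseteq> tidx Is"
  proof
    fix ys assume "ys \<in> ?h ` ?D"
    then obtain i j where ij: "i < Is ! n" "ys = dec Is n i j" by auto
    show "ys \<in> tidx Is" unfolding tidx_def ij(2) dec_def using ij(1) pos by auto
  qed
  have cardT: "card (tidx Is) = Is ! n * ncols Is n"
  proof -
    have "card (tidx Is) = (\<Prod>m\<in>{0..<length Is}. Is ! m)"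
      using tidx_finite_card[of Is] by (simp add: prod.list_conv_set_nth)
    also have "\<dots> = Is ! n * (\<Prod>m\<in>{0..<length Is} - {n}. Is ! m)"
      using n by (simp add: prod.remove)
    finally show ?thesis by (simp add: ncols_def)
  qed
  have "card (?h ` ?D) = card (tidx Is)"
    using inj by (simp add: card_image card_cartesian_product cardT)
  then have "?h ` ?D = tidx Is"
    using sub tidx_finite_card[of Is] by (intro card_subset_eq) auto
  then show ?thesis using inj by (simp add: bij_betw_def)
qed

lemma colsum:
  assumes n: "n < length Is" and pos: "\<forall>m<length Is. 0 < Is ! m"
  shows "(\<Sum>xs\<in>tidx Is. f xs) = (\<Sum>j<ncols Is n. \<Sum>i<Is ! n. f (dec Is n i j))"
proof -
  have "(\<Sum>xs\<in>tidx Is. f xs) = (\<Sum>x\<in>{..<Is ! n} \<times> {..<ncols Is n}. f ((\<lambda>(i, j). dec Is n i j) x))"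
    using sum.reindex_bij_betw[OF dec_bij[OF n pos], of f] by simp
  also have "\<dots> = (\<Sum>i<Is ! n. \<Sum>j<ncols Is n. f (dec Is n i j))"
    by (simp add: sum.cartesian_product split_def)
  also have "\<dots> = (\<Sum>j<ncols Is n. \<Sum>i<Is ! n. f (dec Is n i j))" by (rule sum.swap)
  finally show ?thesis .
qed


definition cnm :: "nat \<Rightarrow> nat \<Rightarrow> (nat list \<Rightarrow> complex) \<Rightarrow> (nat \<Rightarrow> nat \<Rightarrow> complex) \<Rightarrow> nat list \<Rightarrow> complex" where
  "cnm K n b U = (\<lambda>xs. \<Sum>i<K. b (xs[n := i]) * U (xs ! n) i)"

definition cmm :: "nat list \<Rightarrow> (nat list \<Rightarrow> complex) \<Rightarrow> (nat \<Rightarrow> nat \<Rightarrow> nat \<Rightarrow> complex) \<Rightarrow> nat list \<Rightarrow> complex" where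
  "cmm Ks b Us = foldl (\<lambda>b n. cnm (Ks ! n) n b (Us n)) b [0..<length Ks]"

definition tn2 :: "nat list \<Rightarrow> (nat list \<Rightarrow> complex) \<Rightarrow> real" where
  "tn2 Is f = (\<Sum>xs\<in>tidx Is. (cmod (f xs))\<^sup>2)"

lemma cnm_dec: "n < length Is \<Longrightarrow> cnm K n b U (dec Is n i j) = (\<Sum>l<K. b (dec Is n l j) * U i l)"
  unfolding cnm_def by (simp add: dec_upd dec_nth_n)

lemma cnm_commute: assumes "m \<noteq> n"
  shows "cnm K n (cnm K' m b U') U = cnm K' m (cnm K n b U) U'"
proof (rule ext)
  fix xs
  have "cnm K n (cnm K' m b U') U xs = (\<Sum>i<K. \<Sum>j<K'. b (xs[n := i, m := j]) * U' (xs ! m) j * U (xs ! n) i)"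
    unfolding cnm_def using assms by (simp add: sum_distrib_right)
  also have "\<dots> = (\<Sum>j<K'. \<Sum>i<K. b (xs[m := j, n := i]) * U (xs ! n) i * U' (xs ! m) j)"
    by (subst sum.swap) (simp add: list_update_swap[OF assms] mult.commute mult.left_commute)
  also have "\<dots> = cnm K' m (cnm K n b U) U' xs"
    unfolding cnm_def using assms by (simp add: sum_distrib_right)
  finally show "cnm K n (cnm K' m b U') U xs = cnm K' m (cnm K n b U) U' xs" .
qed

lemma foldl_commute:
  "n \<notin> set ns \<Longrightarrow> foldl (\<lambda>b m. cnm (Ks ! m) m b (Us m)) (cnm K n b U) ns = cnm K n (foldl (\<lambda>b m. cnm (Ks ! m) m b (Us m)) b ns) U"
proof (induction ns arbitrary: b)
  case Nil
  then show ?case by simp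
next
  case (Cons m ns)
  then have "m \<noteq> n" by auto
  then have "cnm (Ks ! m) m (cnm K n b U) (Us m) = cnm K n (cnm (Ks ! m) m b (Us m)) U"
    by (simp add: cnm_commute)
  then show ?case using Cons by simp
qed

lemma foldl_extract:
  "n \<in> set ns \<Longrightarrow> \<exists>b'. foldl (\<lambda>b m. cnm (Ks ! m) m b (Us m)) b ns = cnm (Ks ! n) n b' (Us n)"
proof (induction ns rule: rev_induct)
  case Nil
  then show ?case by simp
next
  case (snoc m ns)
  show ?case
  proof (cases "m = n")
    case True
    then show ?thesis by auto
  next
    case False
    then have "n \<in> set ns" using snoc.prems by auto
    then obtain b' where "foldl (\<lambda>b m. cnm (Ks ! m) m b (Us m)) b ns = cnm (Ks ! n) n b' (Us n)"
      using snoc.IH by auto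
    have "n \<noteq> m" using False by simp
    then show ?thesis using \<open>foldl _ b ns = _\<close>
      by (intro exI[of _ "cnm (Ks ! m) m b' (Us m)"]) (simp add: cnm_commute[of n m])
  qed
qed

lemma foldl_two:
  "foldl (\<lambda>b m. cnm (Ks' ! m) m b (G m)) (foldl (\<lambda>b m. cnm (Ks ! m) m b (F m)) a [0..<N]) [0..<N]
   = foldl (\<lambda>b m. cnm (Ks' ! m) m (cnm (Ks ! m) m b (F m)) (G m)) a [0..<N]"
proof (induction N)
  case 0
  then show ?case by simp
next
  case (Suc N)
  have "N \<notin> set [0..<N]" by simp
  then show ?case using Suc by (simp add: foldl_commute)
qed

lemma cnm_diff: "cnm K n (\<lambda>xs. a xs - b xs) U xs = cnm K n a U xs - cnm K n b U xs"
  unfolding cnm_def by (simp add: sum_subtractf left_diff_distrib)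

lemma Wx_diff: "Wx r W (\<lambda>l. a l - b l) i = Wx r W a i - Wx r W b i"
  unfolding Wx_def by (simp add: sum_subtractf right_diff_distrib)

lemma WHx_diff: "WHx r W (\<lambda>l. a l - b l) i = WHx r W a i - WHx r W b i"
  unfolding WHx_def by (simp add: sum_subtractf right_diff_distrib)

lemma VP: assumes W: "orth I r W"
  shows "nrm2 I (\<lambda>i. u i - Wx r W (WHx I W v) i)
     \<le> nrm2 I (\<lambda>i. u i - Wx r W (WHx I W u) i) + nrm2 I (\<lambda>i. u i - v i)"
proof -
  define x where "x i = u i - Wx r W (WHx I W u) i" for i
  define d where "d i = u i - v i" for i
  have e: "u i - Wx r W (WHx I W v) i = x i + Wx r W (WHx I W d) i" for i
  proof -
    have "WHx I W d = (\<lambda>l. WHx I W u l - WHx I W v l)" unfolding d_def by (rule ext) (rule WHx_diff)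
    then show ?thesis unfolding x_def by (simp add: Wx_diff)
  qed
  have c0: "cin I x (Wx r W (WHx I W d)) = 0"
  proof -
    have "cin I x (Wx r W (WHx I W d)) = cnj (cin I (Wx r W (WHx I W d)) x)"
      unfolding cin_def by (simp add: cnj_sum mult.commute)
    also have "cin I (Wx r W (WHx I W d)) x = cin r (WHx I W d) (WHx I W x)" by (rule cin_adj)
    also have "\<dots> = cin r (WHx I W d) (\<lambda>_. 0)"
    proof (rule cin_cong)
      fix l assume l: "l < r"
      show "WHx I W x l = 0" unfolding x_def WHx_diff using WHW[OF W l] by simp
    qed simp
    finally show ?thesis by (simp add: cin_def)
  qed
  have "nrm2 I (\<lambda>i. u i - Wx r W (WHx I W v) i) = nrm2 I (\<lambda>i. x i + Wx r W (WHx I W d) i)"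
    by (simp add: e)
  also have "\<dots> = nrm2 I x + nrm2 I (Wx r W (WHx I W d))" by (simp add: nrm2_add c0)
  also have "\<dots> = nrm2 I x + nrm2 r (WHx I W d)" by (simp add: iso[OF W])
  also have "\<dots> \<le> nrm2 I x + nrm2 I d" using bessel[OF W, of d] by simp
  finally show ?thesis unfolding x_def[abs_def] d_def[abs_def] .
qed

lemma E1:
  fixes a :: "nat list \<Rightarrow> complex" and Uc Sc Vc :: "nat \<Rightarrow> nat \<Rightarrow> nat \<Rightarrow> complex"
  assumes N: "length Ips = length Is" and pos: "\<forall>m<length Is. 0 < Is ! m"
    and le: "\<forall>n<length Is. Ips ! n \<le> Is ! n"
    and svd: "\<forall>n<length Is. is_svd (Is ! n) (ncols Is n) (\<lambda>i j. a (dec Is n i j)) (Uc n) (Sc n) (Vc n)"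
    and Ub: "Ub = (\<lambda>n i j. if j < Ips ! n then Uc n i j else 0)"
    and H: "H = (\<lambda>n i j. cnj (Ub n j i))"
  shows "tn2 Is (\<lambda>xs. a xs - cmm Ips (cmm Is a H) Ub xs)
     \<le> (\<Sum>n<length Is. \<Sum>i\<in>{Ips ! n..<min (Is ! n) (ncols Is n)}. (cmod (Sc n i i))\<^sup>2)"
proof -
  define Q where "Q n b = cnm (Ips ! n) n (cnm (Is ! n) n b (H n)) (Ub n)" for n b
  define tail where "tail n = (\<Sum>i\<in>{Ips ! n..<min (Is ! n) (ncols Is n)}. (cmod (Sc n i i))\<^sup>2)" for n
  have rew: "cmm Ips (cmm Is a H) Ub = foldl (\<lambda>b n. Q n b) a [0..<length Is]"
    unfolding cmm_def Q_def N by (rule foldl_two)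
  have Qdec: "Q n b (dec Is n i j) = Wx (Ips ! n) (Uc n) (WHx (Is ! n) (Uc n) (\<lambda>i'. b (dec Is n i' j))) i"
    if n: "n < length Is" for n b i j
    unfolding Q_def cnm_dec[OF n] Wx_def WHx_def Ub H
    by (intro sum.cong) (auto simp: sum_distrib_right mult.commute)
  have step: "tn2 Is (\<lambda>xs. a xs - Q n b xs) \<le> tn2 Is (\<lambda>xs. a xs - b xs) + tail n"
    if n: "n < length Is" for n b
  proof -
    let ?I = "Is ! n" and ?J = "ncols Is n" and ?r = "Ips ! n"
    have s: "is_svd ?I ?J (\<lambda>i j. a (dec Is n i j)) (Uc n) (Sc n) (Vc n)" using svd n by auto
    have W: "orth ?I ?r (Uc n)"
      using s le n unfolding is_svd_def by (auto intro: orth_mono cunitary_orth)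
    have "tn2 Is (\<lambda>xs. a xs - Q n b xs) = (\<Sum>j<?J. nrm2 ?I (\<lambda>i. a (dec Is n i j) - Wx ?r (Uc n) (WHx ?I (Uc n) (\<lambda>i'. b (dec Is n i' j))) i))"
      unfolding tn2_def colsum[OF n pos] nrm2_def by (simp add: Qdec[OF n])
    also have "\<dots> \<le> (\<Sum>j<?J. nrm2 ?I (\<lambda>i. a (dec Is n i j) - Wx ?r (Uc n) (WHx ?I (Uc n) (\<lambda>i'. a (dec Is n i' j))) i)
                          + nrm2 ?I (\<lambda>i. a (dec Is n i j) - b (dec Is n i j)))"
      by (rule sum_mono) (rule VP[OF W])
    also have "\<dots> = tail n + tn2 Is (\<lambda>xs. a xs - b xs)"
      unfolding sum.distrib tn2_def colsum[OF n pos] tail_def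
      using ML1[OF s le[rule_format, OF n]] by (simp add: nrm2_def)
    finally show ?thesis by simp
  qed
  have ind: "N' \<le> length Is \<Longrightarrow> tn2 Is (\<lambda>xs. a xs - foldl (\<lambda>b n. Q n b) a [0..<N'] xs) \<le> (\<Sum>n<N'. tail n)" for N'
  proof (induction N')
    case 0
    then show ?case by (simp add: tn2_def)
  next
    case (Suc N')
    have "tn2 Is (\<lambda>xs. a xs - foldl (\<lambda>b n. Q n b) a [0..<Suc N'] xs)
        = tn2 Is (\<lambda>xs. a xs - Q N' (foldl (\<lambda>b n. Q n b) a [0..<N']) xs)" by simp
    also have "\<dots> \<le> tn2 Is (\<lambda>xs. a xs - foldl (\<lambda>b n. Q n b) a [0..<N'] xs) + tail N'"
      using Suc.prems by (intro step) simp
    also have "\<dots> \<le> (\<Sum>n<N'. tail n) + tail N'" using Suc by simp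
    finally show ?case by simp
  qed
  show ?thesis using ind[of "length Is"] unfolding rew tail_def by simp
qed

lemma E2:
  fixes a Scc :: "nat list \<Rightarrow> complex" and Uc Sc Vc Wc :: "nat \<Rightarrow> nat \<Rightarrow> nat \<Rightarrow> complex"
  assumes N: "length Ips = length Is" and pos: "\<forall>m<length Is. 0 < Is ! m"
    and le: "\<forall>n<length Is. Ips ! n \<le> Is ! n"
    and n: "n < length Is"
    and s: "is_svd (Is ! n) (ncols Is n) (\<lambda>i j. a (dec Is n i j)) (Uc n) (Sc n) (Vc n)"
    and W: "orth (Is ! n) (Ips ! n) (Wc n)"
  shows "(\<Sum>i\<in>{Ips ! n..<min (Is ! n) (ncols Is n)}. (cmod (Sc n i i))\<^sup>2) \<le> tn2 Is (\<lambda>xs. a xs - cmm Ips Scc Wc xs)"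
proof -
  have "n \<in> set [0..<length Ips]" using n N by simp
  then obtain b' where b': "cmm Ips Scc Wc = cnm (Ips ! n) n b' (Wc n)"
    unfolding cmm_def using foldl_extract by blast
  have "(\<Sum>i\<in>{Ips ! n..<min (Is ! n) (ncols Is n)}. (cmod (Sc n i i))\<^sup>2)
      \<le> (\<Sum>j<ncols Is n. nrm2 (Is ! n) (\<lambda>i. a (dec Is n i j) - Wx (Ips ! n) (Wc n) (\<lambda>l. b' (dec Is n l j)) i))"
    by (rule ML2[OF s W le[rule_format, OF n]])
  also have "\<dots> = tn2 Is (\<lambda>xs. a xs - cmm Ips Scc Wc xs)"
    unfolding tn2_def colsum[OF n pos] b' nrm2_def cnm_dec[OF n] Wx_def
    by (intro sum.cong) (auto simp: mult.commute)
  finally show ?thesis .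
qed


lemma Ltube_inv:
  assumes inv: "\<forall>i<p. \<forall>j<p. (\<Sum>l<p. M i l * M' l j) = (if i = j then 1 else 0)" and k: "k < p"
  shows "Ltube p M (Ltube p M' f) k = f k"
proof -
  have "Ltube p M (Ltube p M' f) k = (\<Sum>j<p. \<Sum>l<p. M k j * M' j l * f l)"
    unfolding Ltube_def by (simp add: sum_distrib_left mult.assoc)
  also have "\<dots> = (\<Sum>l<p. (\<Sum>j<p. M k j * M' j l) * f l)"
    by (subst sum.swap) (simp add: sum_distrib_right)
  also have "\<dots> = (\<Sum>l<p. if k = l then f l else 0)"
    using inv k by (intro sum.cong) auto
  also have "\<dots> = f k" using k by simp
  finally show ?thesis .
qed

lemma Ltube_cong: "(\<And>t. t < p \<Longrightarrow> f t = g t) \<Longrightarrow> Ltube p M f k = Ltube p M g k"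
  unfolding Ltube_def by (intro sum.cong) auto

lemma Ltube_sum: "finite s \<Longrightarrow> Ltube p M (\<lambda>t. \<Sum>i\<in>s. f i t) k = (\<Sum>i\<in>s. Ltube p M (f i) k)"
  unfolding Ltube_def by (simp add: sum_distrib_left sum.swap[of _ s])

lemma Ltube_diff: "Ltube p M (\<lambda>t. f t - g t) k = Ltube p M f k - Ltube p M g k"
  unfolding Ltube_def by (simp add: sum_subtractf right_diff_distrib)

lemma Ltube_zero: "Ltube p M (\<lambda>_. 0) k = 0"
  unfolding Ltube_def by simp

lemma Ltube_tmult:
  assumes inv: "\<forall>i<p. \<forall>j<p. (\<Sum>l<p. Lm i l * Lmi l j) = (if i = j then 1 else 0)" and k: "k < p"
  shows "Ltube p Lm (tmult p Lm Lmi a b) k = Ltube p Lm a k * Ltube p Lm b k"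
  unfolding tmult_def using Ltube_inv[OF inv k] by simp

lemma Ltube_nmode:
  assumes inv: "\<forall>i<p. \<forall>j<p. (\<Sum>l<p. Lm i l * Lmi l j) = (if i = j then 1 else 0)" and k: "k < p"
  shows "Ltube p Lm (nmode p Lm Lmi K n A U xs) k = cnm K n (\<lambda>xs. Ltube p Lm (A xs) k) (\<lambda>i j. Ltube p Lm (U i j) k) xs"
  unfolding nmode_def cnm_def by (simp add: Ltube_sum Ltube_tmult[OF inv k])

lemma Ltube_foldl:
  assumes inv: "\<forall>i<p. \<forall>j<p. (\<Sum>l<p. Lm i l * Lmi l j) = (if i = j then 1 else 0)" and k: "k < p"
  shows "(\<lambda>xs. Ltube p Lm (foldl (\<lambda>B n. nmode p Lm Lmi (Ks ! n) n B (Us n)) A ns xs) k)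
       = foldl (\<lambda>b n. cnm (Ks ! n) n b (\<lambda>i j. Ltube p Lm (Us n i j) k)) (\<lambda>xs. Ltube p Lm (A xs) k) ns"
proof (induction ns arbitrary: A)
  case Nil
  then show ?case by simp
next
  case (Cons m ns)
  have "(\<lambda>xs. Ltube p Lm (nmode p Lm Lmi (Ks ! m) m A (Us m) xs) k)
      = cnm (Ks ! m) m (\<lambda>xs. Ltube p Lm (A xs) k) (\<lambda>i j. Ltube p Lm (Us m i j) k)"
    by (rule ext) (rule Ltube_nmode[OF inv k])
  then show ?case using Cons[of "nmode p Lm Lmi (Ks ! m) m A (Us m)"] by simp
qed

lemma Ltube_mmprod:
  assumes inv: "\<forall>i<p. \<forall>j<p. (\<Sum>l<p. Lm i l * Lmi l j) = (if i = j then 1 else 0)" and k: "k < p"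
  shows "(\<lambda>xs. Ltube p Lm (mmprod p Lm Lmi Ks A Us xs) k)
       = cmm Ks (\<lambda>xs. Ltube p Lm (A xs) k) (\<lambda>n i j. Ltube p Lm (Us n i j) k)"
  unfolding mmprod_def cmm_def by (rule Ltube_foldl[OF inv k])

lemma Ltube_tmH:
  assumes inv: "\<forall>i<p. \<forall>j<p. (\<Sum>l<p. Lm i l * Lmi l j) = (if i = j then 1 else 0)" and k: "k < p"
  shows "Ltube p Lm (tmH p Lm Lmi X i j) k = cnj (Ltube p Lm (X j i) k)"
  unfolding tmH_def using Ltube_inv[OF inv k] by simp

lemma Ltube_tmId:
  assumes inv: "\<forall>i<p. \<forall>j<p. (\<Sum>l<p. Lm i l * Lmi l j) = (if i = j then 1 else 0)" and k: "k < p"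
  shows "Ltube p Lm (tmId p Lmi i j) k = (if i = j then 1 else 0)"
  unfolding tmId_def using Ltube_inv[OF inv k] by (simp add: Ltube_zero)

lemma orth_tmeq:
  assumes inv: "\<forall>i<p. \<forall>j<p. (\<Sum>l<p. Lm i l * Lmi l j) = (if i = j then 1 else 0)" and k: "k < p"
    and e: "tmeq p r r (tmprod p Lm Lmi I (tmH p Lm Lmi W) W) (tmId p Lmi)"
  shows "orth I r (\<lambda>i j. Ltube p Lm (W i j) k)"
  unfolding orth_def
proof (intro allI impI)
  fix l l' assume l: "l < r" "l' < r"
  have "Ltube p Lm (tmprod p Lm Lmi I (tmH p Lm Lmi W) W l l') k = Ltube p Lm (tmId p Lmi l l') k"
    using e l unfolding tmeq_def by (intro Ltube_cong) auto
  moreover have "Ltube p Lm (tmprod p Lm Lmi I (tmH p Lm Lmi W) W l l') k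
      = (\<Sum>i<I. cnj (Ltube p Lm (W i l) k) * Ltube p Lm (W i l') k)"
    unfolding tmprod_def by (simp add: Ltube_sum Ltube_tmult[OF inv k] Ltube_tmH[OF inv k])
  ultimately show "(\<Sum>i<I. cnj (Ltube p Lm (W i l) k) * Ltube p Lm (W i l') k) = (if l = l' then 1 else 0)"
    by (simp add: Ltube_tmId[OF inv k])
qed

lemma NL:
  assumes Wm: "cunitary p Wm" and Lm: "Lm = (\<lambda>i j. c * Wm i j)"
  shows "(\<Sum>k<p. (cmod (Ltube p Lm x k))\<^sup>2) = (cmod c)\<^sup>2 * (\<Sum>t<p. (cmod (x t))\<^sup>2)"
proof -
  have "Ltube p Lm x k = c * Wx p Wm x k" for k
    unfolding Ltube_def Wx_def Lm by (simp add: sum_distrib_left mult.assoc)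
  then have "(\<Sum>k<p. (cmod (Ltube p Lm x k))\<^sup>2) = (cmod c)\<^sup>2 * nrm2 p (Wx p Wm x)"
    unfolding nrm2_def by (simp add: norm_mult power_mult_distrib sum_distrib_left)
  also have "\<dots> = (cmod c)\<^sup>2 * nrm2 p x" by (simp add: iso[OF cunitary_orth[OF Wm]])
  finally show ?thesis by (simp add: nrm2_def)
qed

lemma tube_zero:
  assumes inv1: "\<forall>i<p. \<forall>j<p. (\<Sum>l<p. Lmi i l * Lm l j) = (if i = j then 1 else 0)"
    and z: "\<forall>k<p. Ltube p Lm x k = 0" and t: "t < p"
  shows "x t = 0"
proof -
  have "x t = Ltube p Lmi (Ltube p Lm x) t" using Ltube_inv[OF inv1 t] by simp
  also have "\<dots> = Ltube p Lmi (\<lambda>_. 0) t" using z by (intro Ltube_cong) auto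
  finally show ?thesis by (simp add: Ltube_zero)
qed

lemma trank_prop:
  assumes inv1: "\<forall>i<p. \<forall>j<p. (\<Sum>l<p. Lmi i l * Lm l j) = (if i = j then 1 else 0)"
    and svd: "\<forall>k<p. is_svd I J (X k) (Lslice p Lm U k) (Lslice p Lm S k) (Lslice p Lm V k)"
  shows "trank p I J S \<le> min I J \<and> (\<forall>i. trank p I J S \<le> i \<longrightarrow> i < min I J \<longrightarrow> (\<forall>t<p. S i i t = 0))"
proof -
  define Z where "Z = {i. i < min I J \<and> (\<exists>t<p. S i i t \<noteq> 0)}"
  have fin: "finite Z" unfolding Z_def by simp
  have tr: "trank p I J S = card Z" unfolding trank_def Z_def by simp
  have down: "i' \<in> Z" if iZ: "i \<in> Z" and ii: "i' \<le> i" for i i'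
  proof -
    obtain t where t: "t < p" "S i i t \<noteq> 0" using iZ unfolding Z_def by auto
    have "\<exists>k<p. Ltube p Lm (S i i) k \<noteq> 0"
      using tube_zero[OF inv1 _ t(1), of "S i i"] t(2) by auto
    then obtain k where k: "k < p" "Ltube p Lm (S i i) k \<noteq> 0" by auto
    have imin: "i < min I J" using iZ unfolding Z_def by auto
    have sk: "is_svd I J (X k) (Lslice p Lm U k) (Lslice p Lm S k) (Lslice p Lm V k)" using svd k by auto
    have r1: "Ltube p Lm (S i i) k \<in> \<real>" "0 \<le> Re (Ltube p Lm (S i i) k)"
      "Re (Ltube p Lm (S i i) k) \<le> Re (Ltube p Lm (S i' i') k)"
      using sk imin ii unfolding is_svd_def Lslice_def by auto
    have "Re (Ltube p Lm (S i i) k) \<noteq> 0"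
      using r1(1) k(2) by (metis Reals_cases Re_complex_of_real of_real_0)
    then have "Re (Ltube p Lm (S i' i') k) \<noteq> 0" using r1 by linarith
    then have "Ltube p Lm (S i' i') k \<noteq> 0" by auto
    then have "\<exists>t<p. S i' i' t \<noteq> 0"
      using Ltube_cong[of p "S i' i'" "\<lambda>_. 0" Lm k] by (auto simp: Ltube_zero)
    then show ?thesis using imin ii unfolding Z_def by auto
  qed
  have le: "card Z \<le> min I J"
  proof -
    have "Z \<subseteq> {..<min I J}" unfolding Z_def by auto
    then show ?thesis by (metis card_lessThan card_mono finite_lessThan)
  qed
  have out: "\<forall>t<p. S i i t = 0" if "card Z \<le> i" "i < min I J" for i
  proof (rule ccontr)
    assume "\<not> (\<forall>t<p. S i i t = 0)"
    then have iZ: "i \<in> Z" using that unfolding Z_def by auto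
    have "{..i} \<subseteq> Z" using down[OF iZ] by auto
    then have "card {..i} \<le> card Z" using fin by (rule card_mono[rotated])
    then show False using that by simp
  qed
  show ?thesis using le out tr by auto
qed


theorem theorem5p4:
  fixes p :: nat and c :: complex and Wm Lm Lmi :: "nat \<Rightarrow> nat \<Rightarrow> complex"
    and Is Ips :: "nat list" and A :: tten and U S V :: "nat \<Rightarrow> tmat"
  assumes p: "p \<ge> 1"
    and c: "c \<noteq> 0"
    and Wm: "cunitary p Wm"
    and Lm: "Lm = (\<lambda>i j. c * Wm i j)"
    and Lmi1: "\<forall>i<p. \<forall>j<p. (\<Sum>l<p. Lmi i l * Lm l j) = (if i = j then 1 else 0)"
    and Lmi2: "\<forall>i<p. \<forall>j<p. (\<Sum>l<p. Lm i l * Lmi l j) = (if i = j then 1 else 0)"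
    and Ips: "length Ips = length Is"
    and Ips_bd: "\<forall>n<length Is. 1 \<le> Ips ! n \<and> Ips ! n \<le> Is ! n"
    and tsvd: "\<forall>n<length Is.
        is_tsvd p Lm (Is ! n) (ncols Is n) (unfold Is n A) (U n) (S n) (V n)"
  shows "\<forall>(Sc :: tten) (Ws :: nat \<Rightarrow> tmat).
      (\<forall>n<length Is. tmeq p (Ips ! n) (Ips ! n)
          (tmprod p Lm Lmi (Is ! n) (tmH p Lm Lmi (Ws n)) (Ws n)) (tmId p Lmi)) \<longrightarrow>
      (let Ub = (\<lambda>n. tcols (Ips ! n) (U n));
           St = mmprod p Lm Lmi Is A (\<lambda>n. tmH p Lm Lmi (Ub n));
           Ah = mmprod p Lm Lmi Ips St Ub;
           bnd = sqrt (\<Sum>n<length Is.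
                    \<Sum>i\<in>{Ips ! n..<trank p (Is ! n) (ncols Is n) (S n)}.
                      (tube_norm p (S n i i))\<^sup>2)
       in tnorm p Is (\<lambda>xs k. A xs k - Ah xs k) \<le> bnd \<and>
          bnd \<le> sqrt (real (length Is)) *
            tnorm p Is (\<lambda>xs k. A xs k - mmprod p Lm Lmi Ips Sc Ws xs k))"
proof (intro allI impI)
  fix Sc :: tten and Ws :: "nat \<Rightarrow> tmat"
  assume orthc: "\<forall>n<length Is. tmeq p (Ips ! n) (Ips ! n)
          (tmprod p Lm Lmi (Is ! n) (tmH p Lm Lmi (Ws n)) (Ws n)) (tmId p Lmi)"
  define Ub where "Ub = (\<lambda>n. tcols (Ips ! n) (U n))"
  define St where "St = mmprod p Lm Lmi Is A (\<lambda>n. tmH p Lm Lmi (Ub n))"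
  define Ah where "Ah = mmprod p Lm Lmi Ips St Ub"
  define Bs where "Bs = (\<Sum>n<length Is. \<Sum>i\<in>{Ips ! n..<trank p (Is ! n) (ncols Is n) (S n)}. (tube_norm p (S n i i))\<^sup>2)"
  define cc where "cc = (cmod c)\<^sup>2"
  have cc: "0 < cc" using c by (simp add: cc_def)
  define ak where "ak k = (\<lambda>xs. Ltube p Lm (A xs) k)" for k
  define Uk where "Uk k n = Lslice p Lm (U n) k" for k n
  define Sk where "Sk k n = Lslice p Lm (S n) k" for k n
  define Vk where "Vk k n = Lslice p Lm (V n) k" for k n
  define tl where "tl n k = (\<Sum>i\<in>{Ips ! n..<min (Is ! n) (ncols Is n)}. (cmod (Sk k n i i))\<^sup>2)" for n k
  have pos: "\<forall>m<length Is. 0 < Is ! m" using Ips_bd by fastforce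
  have le: "\<forall>n<length Is. Ips ! n \<le> Is ! n" using Ips_bd by auto
  have svdk: "is_svd (Is ! n) (ncols Is n) (\<lambda>i j. ak k (dec Is n i j)) (Uk k n) (Sk k n) (Vk k n)"
    if k: "k < p" and n: "n < length Is" for k n
  proof -
    have "Lslice p Lm (unfold Is n A) k = (\<lambda>i j. ak k (dec Is n i j))"
      unfolding Lslice_def unfold_dec ak_def by simp
    moreover have "is_svd (Is ! n) (ncols Is n) (Lslice p Lm (unfold Is n A) k) (Uk k n) (Sk k n) (Vk k n)"
      using tsvd k n unfolding is_tsvd_def Uk_def Sk_def Vk_def by blast
    ultimately show ?thesis by simp
  qed
  have normconv: "(\<Sum>t<p. (cmod (x t))\<^sup>2) = (\<Sum>k<p. (cmod (Ltube p Lm x k))\<^sup>2) / cc" for x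
    using NL[OF Wm Lm, of x] cc by (simp add: cc_def)
  have tnorm_sq: "(tnorm p Is F)\<^sup>2 = (\<Sum>k<p. tn2 Is (\<lambda>xs. Ltube p Lm (F xs) k)) / cc" for F
  proof -
    have "(tnorm p Is F)\<^sup>2 = (\<Sum>xs\<in>tidx Is. \<Sum>k<p. (cmod (F xs k))\<^sup>2)"
      unfolding tnorm_def by (simp add: sum_nonneg)
    also have "\<dots> = (\<Sum>xs\<in>tidx Is. (\<Sum>k<p. (cmod (Ltube p Lm (F xs) k))\<^sup>2) / cc)"
      by (intro sum.cong refl) (rule normconv)
    also have "\<dots> = (\<Sum>k<p. tn2 Is (\<lambda>xs. Ltube p Lm (F xs) k)) / cc"
      unfolding tn2_def by (simp add: sum_divide_distrib[symmetric] sum.swap[of _ "tidx Is"])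
    finally show ?thesis .
  qed
  have tnorm_nn: "0 \<le> tnorm p Is F" for F unfolding tnorm_def by (simp add: sum_nonneg)
  have TS: "(\<Sum>i\<in>{Ips ! n..<trank p (Is ! n) (ncols Is n) (S n)}. (tube_norm p (S n i i))\<^sup>2) = (\<Sum>k<p. tl n k) / cc"
    if n: "n < length Is" for n
  proof -
    let ?I = "Is ! n" and ?J = "ncols Is n"
    have tp: "trank p ?I ?J (S n) \<le> min ?I ?J \<and> (\<forall>i. trank p ?I ?J (S n) \<le> i \<longrightarrow> i < min ?I ?J \<longrightarrow> (\<forall>t<p. S n i i t = 0))"
      by (rule trank_prop[OF Lmi1]) (use tsvd n in \<open>auto simp: is_tsvd_def\<close>)
    have "(\<Sum>i\<in>{Ips ! n..<trank p ?I ?J (S n)}. (tube_norm p (S n i i))\<^sup>2)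
        = (\<Sum>i\<in>{Ips ! n..<trank p ?I ?J (S n)}. \<Sum>t<p. (cmod (S n i i t))\<^sup>2)"
      unfolding tube_norm_def by (simp add: sum_nonneg)
    also have "\<dots> = (\<Sum>i\<in>{Ips ! n..<min ?I ?J}. \<Sum>t<p. (cmod (S n i i t))\<^sup>2)"
      by (rule sum.mono_neutral_left) (use tp in auto)
    also have "\<dots> = (\<Sum>i\<in>{Ips ! n..<min ?I ?J}. (\<Sum>k<p. (cmod (Sk k n i i))\<^sup>2) / cc)"
      unfolding Sk_def Lslice_def by (intro sum.cong refl) (rule normconv)
    also have "\<dots> = (\<Sum>k<p. tl n k) / cc"
      unfolding tl_def by (simp add: sum_divide_distrib[symmetric] sum.swap[of _ "{Ips ! n..<min ?I ?J}"])
    finally show ?thesis .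
  qed
  have BsEq: "Bs = (\<Sum>n<length Is. (\<Sum>k<p. tl n k) / cc)"
    unfolding Bs_def using TS by (intro sum.cong) auto
  define Ubk where "Ubk k = (\<lambda>n i j. if j < Ips ! n then Uk k n i j else 0)" for k
  define Hk where "Hk k = (\<lambda>n i j. cnj (Ubk k n j i))" for k
  have Ahk: "(\<lambda>xs. Ltube p Lm (Ah xs) k) = cmm Ips (cmm Is (ak k) (Hk k)) (Ubk k)" if k: "k < p" for k
  proof -
    have e1: "(\<lambda>n i j. Ltube p Lm (Ub n i j) k) = Ubk k"
      unfolding Ub_def tcols_def Ubk_def Uk_def Lslice_def by (intro ext) (simp add: Ltube_zero)
    have e2: "(\<lambda>n i j. Ltube p Lm (tmH p Lm Lmi (Ub n) i j) k) = Hk k"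
      unfolding Hk_def Ltube_tmH[OF Lmi2 k] by (intro ext) (simp add: e1[symmetric])
    show ?thesis unfolding Ah_def Ltube_mmprod[OF Lmi2 k] St_def e1 e2 ak_def by simp
  qed
  have first: "(tnorm p Is (\<lambda>xs k. A xs k - Ah xs k))\<^sup>2 \<le> Bs"
  proof -
    have "(tnorm p Is (\<lambda>xs k. A xs k - Ah xs k))\<^sup>2 = (\<Sum>k<p. tn2 Is (\<lambda>xs. ak k xs - Ltube p Lm (Ah xs) k)) / cc"
      unfolding tnorm_sq by (simp add: Ltube_diff ak_def)
    also have "\<dots> \<le> (\<Sum>k<p. \<Sum>n<length Is. tl n k) / cc"
    proof (rule divide_right_mono[OF sum_mono])
      fix k assume "k \<in> {..<p}"
      then have k: "k < p" by simp
      have "tn2 Is (\<lambda>xs. ak k xs - Ltube p Lm (Ah xs) k) = tn2 Is (\<lambda>xs. ak k xs - cmm Ips (cmm Is (ak k) (Hk k)) (Ubk k) xs)"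
        using fun_cong[OF Ahk[OF k]] by simp
      also have "\<dots> \<le> (\<Sum>n<length Is. tl n k)"
        unfolding tl_def
        by (rule E1[OF Ips pos le _ Ubk_def[of k] Hk_def[of k]]) (use svdk k in auto)
      finally show "tn2 Is (\<lambda>xs. ak k xs - Ltube p Lm (Ah xs) k) \<le> (\<Sum>n<length Is. tl n k)" .
    qed (use cc in simp)
    also have "\<dots> = Bs" unfolding BsEq by (simp add: sum_divide_distrib[symmetric] sum.swap[of _ "{..<length Is}"])
    finally show ?thesis .
  qed
  define B where "B = mmprod p Lm Lmi Ips Sc Ws"
  have second: "Bs \<le> real (length Is) * (tnorm p Is (\<lambda>xs k. A xs k - B xs k))\<^sup>2"
  proof -
    define T where "T k = tn2 Is (\<lambda>xs. ak k xs - Ltube p Lm (B xs) k)" for k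
    have tlT: "tl n k \<le> T k" if n: "n < length Is" and k: "k < p" for n k
    proof -
      have Bk: "(\<lambda>xs. Ltube p Lm (B xs) k) = cmm Ips (\<lambda>xs. Ltube p Lm (Sc xs) k) (\<lambda>n i j. Ltube p Lm (Ws n i j) k)"
        unfolding B_def by (rule Ltube_mmprod[OF Lmi2 k])
      have o: "orth (Is ! n) (Ips ! n) (\<lambda>i j. Ltube p Lm (Ws n i j) k)"
        by (rule orth_tmeq[OF Lmi2 k]) (use orthc n in auto)
      have "tl n k \<le> tn2 Is (\<lambda>xs. ak k xs - cmm Ips (\<lambda>xs. Ltube p Lm (Sc xs) k) (\<lambda>n i j. Ltube p Lm (Ws n i j) k) xs)"
        unfolding tl_def
        by (rule E2[where Uc = "Uk k" and Sc = "Sk k" and Vc = "Vk k" and a = "ak k" and Wc = "\<lambda>n i j. Ltube p Lm (Ws n i j) k", OF Ips pos le n svdk[OF k n]]) (use o in simp)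
      then show ?thesis unfolding T_def using fun_cong[OF Bk] by simp
    qed
    have "Bs = (\<Sum>n<length Is. (\<Sum>k<p. tl n k) / cc)" by (rule BsEq)
    also have "\<dots> \<le> (\<Sum>n<length Is. (\<Sum>k<p. T k) / cc)"
      by (intro sum_mono divide_right_mono) (use tlT cc in auto)
    also have "\<dots> = real (length Is) * ((\<Sum>k<p. T k) / cc)" by simp
    also have "(\<Sum>k<p. T k) / cc = (tnorm p Is (\<lambda>xs k. A xs k - B xs k))\<^sup>2"
      unfolding tnorm_sq T_def by (simp add: Ltube_diff ak_def)
    finally show ?thesis .
  qed
  show "let Ub = (\<lambda>n. tcols (Ips ! n) (U n));
           St = mmprod p Lm Lmi Is A (\<lambda>n. tmH p Lm Lmi (Ub n));
           Ah = mmprod p Lm Lmi Ips St Ub;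
           bnd = sqrt (\<Sum>n<length Is.
                    \<Sum>i\<in>{Ips ! n..<trank p (Is ! n) (ncols Is n) (S n)}.
                      (tube_norm p (S n i i))\<^sup>2)
       in tnorm p Is (\<lambda>xs k. A xs k - Ah xs k) \<le> bnd \<and>
          bnd \<le> sqrt (real (length Is)) *
            tnorm p Is (\<lambda>xs k. A xs k - mmprod p Lm Lmi Ips Sc Ws xs k)"
    unfolding Let_def Ub_def[symmetric] St_def[symmetric] Ah_def[symmetric] Bs_def[symmetric] B_def[symmetric]
  proof
    show "tnorm p Is (\<lambda>xs k. A xs k - Ah xs k) \<le> sqrt Bs"
      using real_sqrt_le_mono[OF first] tnorm_nn by simp
    have "sqrt Bs \<le> sqrt (real (length Is) * (tnorm p Is (\<lambda>xs k. A xs k - B xs k))\<^sup>2)"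
      by (rule real_sqrt_le_mono[OF second])
    also have "\<dots> = sqrt (real (length Is)) * tnorm p Is (\<lambda>xs k. A xs k - B xs k)"
      using tnorm_nn by (simp add: real_sqrt_mult)
    finally show "sqrt Bs \<le> sqrt (real (length Is)) * tnorm p Is (\<lambda>xs k. A xs k - B xs k)" .
  qed
qed

end
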